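(* Let $r$ be a prime power, $m\ge1$ an integer, and let $G$ be one of the classical groups $\mathrm{L}_m(r)$, $\mathrm{U}_m(r)$, $\mathrm{PSp}_{2m}(r)$, $\Omega_{2m+1}(r)$, or $\mathrm{P\Omega}^{\pm}_{2m}(r)$ (for parameters where these are the finite simple classical groups). If $p$ is a prime not dividing $r$, then $$v_p(|G|)\le 3\,\frac{\log (r+1)^m}{\log p}.$$
   Context: Notation follows Kleidman–Liebeck: $\mathrm{L}_m(r)=\mathrm{PSL}_m(r)$, $\mathrm{U}_m(r)=\mathrm{PSU}_m(r)$ (defined over $\mathbb{F}_{r^2}$), $\mathrm{PSp}_{2m}(r)$ the projective symplectic group, $\Omega_{2m+1}(r)$ ($r$ odd) and $\mathrm{P\Omega}^{\pm}_{2m}(r)$ the simple orthogonal groups; $r$ is the order of the defining field in this notation. For a prime $p$ and nonzero integer $N$, $v_p(N)$ is the largest $k$ with $p^k\mid N$. *)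

theory Defs
  imports "HOL-Computational_Algebra.Primes" Complex_Main
begin

text \<open>The families of finite simple classical groups (Kleidman--Liebeck notation):
  L_m(r), U_m(r), PSp_{2m}(r), Omega_{2m+1}(r) (r odd), POmega^+_{2m}(r), POmega^-_{2m}(r).\<close>
datatype classical_family = Lin | Unit | Symp | OrthOdd | OrthPlus | OrthMinus

text \<open>Order of the group of the given family with parameters m and r (standard order formulas,
  as tabulated in Kleidman--Liebeck, Table 5.1.A).\<close>
fun classical_order :: "classical_family \<Rightarrow> nat \<Rightarrow> nat \<Rightarrow> nat" where
  "classical_order Lin m r =
     nat ((int r ^ (m * (m - 1) div 2) * (\<Prod>i\<in>{2..m}. (int r ^ i - 1)))
          div int (gcd m (r - 1)))"
| "classical_order Unit m r =
     nat ((int r ^ (m * (m - 1) div 2) * (\<Prod>i\<in>{2..m}. (int r ^ i - (-1) ^ i)))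
          div int (gcd m (r + 1)))"
| "classical_order Symp m r =
     nat ((int r ^ (m * m) * (\<Prod>i\<in>{1..m}. (int r ^ (2 * i) - 1)))
          div int (gcd 2 (r - 1)))"
| "classical_order OrthOdd m r =
     nat ((int r ^ (m * m) * (\<Prod>i\<in>{1..m}. (int r ^ (2 * i) - 1))) div 2)"
| "classical_order OrthPlus m r =
     nat ((int r ^ (m * (m - 1)) * (int r ^ m - 1) * (\<Prod>i\<in>{1..m-1}. (int r ^ (2 * i) - 1)))
          div gcd 4 (int r ^ m - 1))"
| "classical_order OrthMinus m r =
     nat ((int r ^ (m * (m - 1)) * (int r ^ m + 1) * (\<Prod>i\<in>{1..m-1}. (int r ^ (2 * i) - 1)))
          div gcd 4 (int r ^ m + 1))"

fun simple_params :: "classical_family \<Rightarrow> nat \<Rightarrow> nat \<Rightarrow> bool" where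
  "simple_params Lin m r = (m \<ge> 2 \<and> \<not> (m = 2 \<and> r \<le> 3))"
| "simple_params Unit m r = (m \<ge> 3 \<and> \<not> (m = 3 \<and> r = 2))"
| "simple_params Symp m r = (m \<ge> 2 \<and> \<not> (m = 2 \<and> r = 2))"
| "simple_params OrthOdd m r = (odd r \<and> m \<ge> 2)"
| "simple_params OrthPlus m r = (m \<ge> 3)"
| "simple_params OrthMinus m r = (m \<ge> 2)"

definition prime_power :: "nat \<Rightarrow> bool" where
  "prime_power r \<longleftrightarrow> (\<exists>q k. prime q \<and> k \<ge> 1 \<and> r = q ^ k)"

end

theory Submission
  imports Defs "HOL-Number_Theory.Number_Theory"
begin

lemma geo_nat:
  fixes x :: nat assumes "x \<ge> 1"
  shows "x ^ n - 1 = (x - 1) * (\<Sum>i<n. x ^ i)"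
proof -
  have "int (x ^ n - 1) = int x ^ n - 1" using assms by (simp add: of_nat_diff)
  also have "\<dots> = (int x - 1) * (\<Sum>i<n. int x ^ i)" by (rule power_diff_1_eq)
  also have "\<dots> = int ((x - 1) * (\<Sum>i<n. x ^ i))" using assms by (simp add: of_nat_diff)
  finally show ?thesis by (simp only: of_nat_eq_iff)
qed

lemma lteA:
  fixes x p b :: nat
  assumes p: "prime p" and x: "x > 1" and px: "p dvd x - 1" and pb: "\<not> p dvd b"
  shows "multiplicity p (x ^ b - 1) = multiplicity p (x - 1)"
proof -
  have b0: "b > 0" using pb by (cases b) auto
  define S where "S = (\<Sum>i<b. x ^ i)"
  have c1: "[x = 1] (mod p)" using px x cong_altdef_nat by auto
  have "[S = (\<Sum>i<b. 1)] (mod p)" unfolding S_def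
    by (rule cong_sum) (metis c1 cong_pow power_one)
  hence "[S = b] (mod p)" by simp
  hence nd: "\<not> p dvd S" using pb by (metis cong_dvd_iff)
  have S0: "S \<noteq> 0" using nd by (metis dvd_0_right)
  have "x ^ b - 1 = (x - 1) * S" unfolding S_def using x by (intro geo_nat) auto
  hence "multiplicity p (x ^ b - 1) = multiplicity p (x - 1) + multiplicity p S"
    using p x S0 by (simp add: prime_elem_multiplicity_mult_distrib)
  thus ?thesis using nd not_dvd_imp_multiplicity_0 by simp
qed

lemma pow_cong_sq:
  fixes p a i :: nat
  shows "[(1 + p * a) ^ i = 1 + i * p * a] (mod p^2)"
proof (induction i)
  case 0 then show ?case by simp
next
  case (Suc i)
  have "[(1 + p * a) ^ Suc i = (1 + i * p * a) * (1 + p * a)] (mod p^2)"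
    using Suc cong_mult[OF Suc cong_refl, of "1 + p*a"] by (simp add: mult.commute)
  moreover have "(1 + i * p * a) * (1 + p * a) = (1 + Suc i * p * a) + (i * a * a) * p^2"
    by (simp add: algebra_simps power2_eq_square)
  moreover have "[(1 + Suc i * p * a) + (i * a * a) * p^2 = 1 + Suc i * p * a] (mod p^2)"
    by (simp add: cong_def)
  ultimately show ?case by (metis cong_trans)
qed

lemma lteB:
  fixes x p :: nat
  assumes p: "prime p" and x: "x > 1" and px: "p dvd x - 1" and c: "odd p \<or> 4 dvd x - 1"
  shows "multiplicity p (x ^ p - 1) \<le> multiplicity p (x - 1) + 1"
proof -
  define S where "S = (\<Sum>i<p. x ^ i)"
  have p1: "p > 1" using p prime_gt_1_nat by blast
  have nd: "\<not> p^2 dvd S"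
  proof (cases "odd p")
    case True
    obtain a where a: "x = 1 + p * a" using px x by (metis dvd_def le_add_diff_inverse less_imp_le_nat)
    obtain k where k: "p - 1 = 2 * k" using True p1 by (metis odd_two_times_div_two_nat dvd_mult_div_cancel)
    have "[S = (\<Sum>i<p. 1 + i * p * a)] (mod p^2)" unfolding S_def a
      by (rule cong_sum) (rule pow_cong_sq)
    moreover have "(\<Sum>i<p. 1 + i * p * a) = p + p * a * (\<Sum>i<p. i)"
    proof -
      have "(\<Sum>i<p. 1 + i * p * a) = (\<Sum>i<p. (1::nat)) + (\<Sum>i<p. i * p * a)" by (rule sum.distrib)
      also have "\<dots> = p + p * a * (\<Sum>i<p. i)"
        by (simp add: sum_distrib_left sum_distrib_right mult.commute mult.left_commute)
      finally show ?thesis .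
    qed
    moreover have "(\<Sum>i<p. i) = p * k"
    proof -
      have "(\<Sum>i<p. i) = \<Sum>{0..<p}" by (simp add: atLeast0LessThan)
      also have "\<dots> = p * (p - 1) div 2" by (simp add: Sum_Ico_nat)
      also have "\<dots> = p * k" using k by simp
      finally show ?thesis .
    qed
    ultimately have "[S = p + (a * k) * p^2] (mod p^2)"
      by (simp add: algebra_simps power2_eq_square)
    hence "[S = p] (mod p^2)" by (simp add: cong_def)
    moreover have "\<not> p^2 dvd p" using p1
      by (metis nat_dvd_not_less power2_eq_square less_1_mult nat_mult_less_cancel1 mult.right_neutral
          zero_less_one less_trans dvd_imp_le)
    ultimately show ?thesis by (metis cong_dvd_iff)
  next
    case False
    hence p2: "p = 2" using primes_dvd_imp_eq[OF two_is_prime_nat p] by auto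
    with c False have "4 dvd x - 1" by auto
    then obtain a where a: "x = 1 + 4 * a" using x by (metis dvd_def le_add_diff_inverse less_imp_le_nat)
    have "S = 2 + 4 * a" unfolding S_def p2 a by (simp add: numeral_2_eq_2)
    thus ?thesis using p2 by simp presburger
  qed
  have S0: "S \<noteq> 0" using nd by (metis dvd_0_right)
  have "x ^ p - 1 = (x - 1) * S" unfolding S_def using x by (intro geo_nat) auto
  hence eq: "multiplicity p (x ^ p - 1) = multiplicity p (x - 1) + multiplicity p S"
    using p x S0 by (simp add: prime_elem_multiplicity_mult_distrib)
  have "multiplicity p S \<le> 1"
  proof (rule ccontr)
    assume "\<not> ?thesis"
    hence "p ^ 2 dvd S" by (intro multiplicity_dvd') auto
    with nd show False by simp
  qed
  with eq show ?thesis by simp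
qed


lemma mult_p_times:
  fixes p q :: nat assumes "prime p" "q \<noteq> 0"
  shows "multiplicity p (p * q) = Suc (multiplicity p q)"
  using assms prime_elem_multiplicity_mult_distrib[of p p q] multiplicity_self[of p]
  by (auto simp: prime_gt_0_nat prime_imp_prime_elem)

lemma lte:
  fixes p :: nat assumes p: "prime p"
  shows "\<forall>x. x > 1 \<and> p dvd x - 1 \<and> (odd p \<or> 4 dvd x - 1) \<longrightarrow> j > 0 \<longrightarrow>
           multiplicity p (x ^ j - 1) \<le> multiplicity p (x - 1) + multiplicity p j"
proof (induction j rule: less_induct)
  case (less j)
  show ?case
  proof (intro allI impI)
    fix x :: nat
    assume cx: "x > 1 \<and> p dvd x - 1 \<and> (odd p \<or> 4 dvd x - 1)" and j0: "j > 0"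
    show "multiplicity p (x ^ j - 1) \<le> multiplicity p (x - 1) + multiplicity p j"
    proof (cases "p dvd j")
      case False
      thus ?thesis using lteA[OF p, of x j] cx by simp
    next
      case True
      then obtain k where k: "j = p * k" by blast
      have p1: "p > 1" using p prime_gt_1_nat by blast
      have k0: "k > 0" using j0 k by (cases k) auto
      have kj: "k < j" using k p1 k0 by simp
      have xp1: "x ^ p > 1" using one_less_power[of x p] cx p1 by simp
      have dv: "x - 1 dvd x ^ p - 1" using geo_nat[of x p] cx by simp
      have cxp: "x ^ p > 1 \<and> p dvd x ^ p - 1 \<and> (odd p \<or> 4 dvd x ^ p - 1)"
        using cx xp1 dv dvd_trans by blast
      have "multiplicity p (x ^ j - 1) = multiplicity p ((x ^ p) ^ k - 1)"
        by (simp add: k power_mult)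
      also have "\<dots> \<le> multiplicity p (x ^ p - 1) + multiplicity p k"
        using less.IH[OF kj] cxp k0 by blast
      also have "\<dots> \<le> multiplicity p (x - 1) + 1 + multiplicity p k"
        using lteB[OF p, of x] cx by simp
      also have "multiplicity p j = 1 + multiplicity p k"
        using mult_p_times[OF p, of k] k0 k by simp
      ultimately show ?thesis by simp
    qed
  qed
qed

definition lf :: "nat \<Rightarrow> nat \<Rightarrow> nat" where
  "lf p n = (\<Sum>j\<in>{1..n}. multiplicity p j)"

lemma lf_Suc: "lf p (Suc n) = lf p n + multiplicity p (Suc n)"
  unfolding lf_def by simp

lemma lf_rec:
  fixes p :: nat assumes p: "prime p"
  shows "lf p n = n div p + lf p (n div p)"
proof (induction n)
  case 0 then show ?case by (simp add: lf_def)
next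
  case (Suc n)
  have p1: "p > 1" using p prime_gt_1_nat by blast
  show ?case
  proof (cases "p dvd Suc n")
    case True
    hence d: "Suc n div p = Suc (n div p)" by (simp add: div_Suc)
    have e: "Suc n = p * Suc (n div p)" using True d by (metis dvd_mult_div_cancel)
    have "multiplicity p (Suc n) = 1 + multiplicity p (Suc (n div p))"
      using mult_p_times[OF p, of "Suc (n div p)"] e by simp
    thus ?thesis using Suc d by (simp add: lf_Suc)
  next
    case False
    hence d: "Suc n div p = n div p" by (simp add: div_Suc dvd_eq_mod_eq_0)
    have "multiplicity p (Suc n) = 0" using False not_dvd_imp_multiplicity_0 by blast
    thus ?thesis using Suc d by (simp add: lf_Suc)
  qed
qed

lemma lf_bound:
  fixes p :: nat assumes p: "prime p"
  shows "(p - 1) * lf p n \<le> n"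
proof (induction n rule: less_induct)
  case (less n)
  have p1: "p > 1" using p prime_gt_1_nat by blast
  show ?case
  proof (cases "n = 0")
    case True then show ?thesis by (simp add: lf_def)
  next
    case False
    hence lt: "n div p < n" using p1 by simp
    have "(p - 1) * lf p n = (p - 1) * (n div p) + (p - 1) * lf p (n div p)"
      by (subst lf_rec[OF p]) (simp add: algebra_simps)
    also have "\<dots> \<le> (p - 1) * (n div p) + n div p" using less.IH[OF lt] by simp
    also have "\<dots> = p * (n div p)" using p1 by (simp add: algebra_simps)
    also have "\<dots> \<le> n" by simp
    finally show ?thesis .
  qed
qed

lemma three_pow: "k + 1 \<le> (3::nat) ^ k"
  by (induction k) auto

lemma lf_pow_bound:
  fixes p :: nat assumes p: "prime p"
  shows "p ^ lf p n \<le> 3 ^ n"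
proof -
  have p1: "p > 1" using p prime_gt_1_nat by blast
  have "p \<le> 3 ^ (p - 1)" using three_pow[of "p - 1"] p1 by simp
  hence "p ^ lf p n \<le> (3 ^ (p - 1)) ^ lf p n" by (rule power_mono) simp
  also have "\<dots> = 3 ^ ((p - 1) * lf p n)" by (simp add: power_mult)
  also have "\<dots> \<le> 3 ^ n" using lf_bound[OF p, of n] by (intro power_increasing) auto
  finally show ?thesis .
qed


lemma odd_sq_4: "odd (y::nat) \<Longrightarrow> 4 dvd y ^ 2 - 1"
proof -
  assume "odd y"
  then obtain c where c: "y = 2 * c + 1" by (metis oddE)
  have "y ^ 2 - 1 = 4 * (c * c + c)" unfolding c by (simp add: power2_eq_square algebra_simps)
  thus ?thesis by simp
qed

lemma main_bound:
  fixes p r m :: nat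
  assumes p: "prime p" and r: "r \<ge> 2" and pr: "\<not> p dvd r"
  shows "p ^ (\<Sum>i\<in>{1..m}. multiplicity p (r ^ (2 * i) - 1)) \<le> (3 * r ^ 2) ^ m"
proof -
  define s where "s = r ^ 2"
  have s4: "s \<ge> 4" unfolding s_def using power_mono[OF r, of 2] by simp
  have cop: "coprime p s" unfolding s_def using pr p
    by (simp add: prime_imp_coprime_nat)
  define e where "e = ord p s"
  have e0: "e > 0" unfolding e_def using cop ord_eq_0[of p s] by simp
  have ord1: "[s ^ e = 1] (mod p)" unfolding e_def by (rule ord)
  define t where "t = multiplicity p (s ^ e - 1)"
  define g where "g i = (if e dvd i then t + multiplicity p (i div e) else 0)" for i
  have x1: "s ^ e > 1" using s4 e0 one_less_power[of s e] by simp
  have px: "p dvd s ^ e - 1" using ord1 x1 cong_altdef_nat[of 1 "s ^ e" p] by simp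
  have c4: "odd p \<or> 4 dvd s ^ e - 1"
  proof (cases "odd p")
    case False
    hence "p = 2" using primes_dvd_imp_eq[OF two_is_prime_nat p] by auto
    hence "odd (r ^ e)" using pr by simp
    hence "4 dvd (r ^ e) ^ 2 - 1" by (rule odd_sq_4)
    thus ?thesis unfolding s_def by (simp add: power_mult[symmetric] mult.commute)
  qed simp
  have step1: "multiplicity p (r ^ (2 * i) - 1) \<le> g i" if i: "i \<ge> 1" for i
  proof -
    have ri: "r ^ (2 * i) = s ^ i" unfolding s_def by (simp add: power_mult)
    show ?thesis
    proof (cases "e dvd i")
      case False
      hence "\<not> [s ^ i = 1] (mod p)" unfolding e_def using ord_divides by blast
      moreover have "s ^ i \<ge> 1" using s4 by simp
      ultimately have "\<not> p dvd s ^ i - 1" using cong_altdef_nat by blast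
      hence "multiplicity p (s ^ i - 1) = 0" by (rule not_dvd_imp_multiplicity_0)
      thus ?thesis using ri by simp
    next
      case True
      then obtain k where k: "i = e * k" by blast
      have k0: "k > 0" using k i by (cases k) auto
      have "multiplicity p (r ^ (2 * i) - 1) = multiplicity p ((s ^ e) ^ k - 1)"
        by (simp only: ri k power_mult s_def)
      also have "\<dots> \<le> t + multiplicity p k" unfolding t_def
        using lte[OF p, of k] x1 px c4 k0 by blast
      finally show ?thesis unfolding g_def using True k e0 by simp
    qed
  qed
  have step2: "(\<Sum>i\<in>{1..n}. g i) = (n div e) * t + lf p (n div e)" for n
  proof (induction n)
    case 0 then show ?case by (simp add: lf_def)
  next
    case (Suc n)
    show ?case
    proof (cases "e dvd Suc n")
      case True
      hence d: "Suc n div e = Suc (n div e)" by (simp add: div_Suc)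
      thus ?thesis using Suc True by (simp add: g_def lf_Suc)
    next
      case False
      hence d: "Suc n div e = n div e" by (simp add: div_Suc dvd_eq_mod_eq_0)
      thus ?thesis using Suc False by (simp add: g_def)
    qed
  qed
  define n where "n = m div e"
  have pt: "p ^ t \<le> s ^ e"
  proof -
    have "p ^ t dvd s ^ e - 1" unfolding t_def by (rule multiplicity_dvd)
    hence "p ^ t \<le> s ^ e - 1" using x1 by (intro dvd_imp_le) auto
    thus ?thesis by simp
  qed
  have p0: "p > 0" using p prime_gt_0_nat by blast
  have "p ^ (\<Sum>i\<in>{1..m}. multiplicity p (r ^ (2 * i) - 1)) \<le> p ^ (\<Sum>i\<in>{1..m}. g i)"
    using p0 step1 by (intro power_increasing sum_mono) auto
  also have "\<dots> = (p ^ t) ^ n * p ^ lf p n"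
    unfolding step2 n_def by (simp add: power_add power_mult mult.commute)
  also have "\<dots> \<le> (s ^ e) ^ n * 3 ^ n"
    using pt lf_pow_bound[OF p, of n] by (intro mult_mono power_mono) auto
  also have "\<dots> \<le> s ^ m * 3 ^ m"
  proof (intro mult_mono)
    have "e * n \<le> m" unfolding n_def by simp
    thus "(s ^ e) ^ n \<le> s ^ m" using s4 by (simp add: power_mult[symmetric] power_increasing)
    show "3 ^ n \<le> (3::nat) ^ m" unfolding n_def by (intro power_increasing) auto
  qed auto
  also have "\<dots> = (3 * r ^ 2) ^ m" unfolding s_def by (simp add: power_mult_distrib)
  finally show ?thesis .
qed


lemma nat_div_dvd:
  fixes X g :: int and Y :: nat
  assumes "0 \<le> X" "0 \<le> g" "g dvd X" "X dvd int Y"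
  shows "nat (X div g) dvd Y"
proof -
  have nn: "0 \<le> X div g" using assms(1,2) by (simp add: div_int_pos_iff)
  have "X div g dvd X" using assms(3) by (metis dvd_mult_div_cancel dvd_triv_right)
  hence "int (nat (X div g)) dvd int Y" using nn assms(4) by (simp add: dvd_trans)
  thus ?thesis by (simp only: of_nat_dvd_iff)
qed

lemma sq_fac: "(x::int) ^ (2 * i) - 1 = (x ^ i - 1) * (x ^ i + 1)"
proof -
  have "x ^ (2 * i) = x ^ i * x ^ i" by (simp add: mult_2 power_add)
  thus ?thesis by (simp add: algebra_simps)
qed

lemma sq_fac2: "(x::int) ^ (2 * i) - 1 = (x ^ i - (-1) ^ i) * (x ^ i + (-1) ^ i)"
proof -
  have "x ^ (2 * i) = x ^ i * x ^ i" by (simp add: mult_2 power_add)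
  moreover have "((-1::int) ^ i) * ((-1) ^ i) = 1" by (simp add: power_mult_distrib[symmetric])
  ultimately show ?thesis by (simp add: algebra_simps)
qed

lemma neg1_le: "(-1::int) ^ i \<le> 1"
  by (cases "even i") auto

lemma ge1: "r \<ge> 1 \<Longrightarrow> (1::int) \<le> int r ^ i"
  by (simp add: one_le_power)

lemma exists_dvd:
  fixes F m r
  assumes r: "r \<ge> 2" and m: "m \<ge> 1" and sp: "simple_params F m r"
  defines "Q \<equiv> (\<Prod>i\<in>{1..m}. int r ^ (2 * i) - 1)"
  shows "\<exists>a. int (classical_order F m r) dvd int r ^ a * Q \<and> 0 \<le> Q"
proof -
  have r1: "r \<ge> 1" using r by simp
  have Q0: "0 \<le> Q" unfolding Q_def using ge1[OF r1] r1 by (intro prod_nonneg) auto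
  have fac: "int r ^ (2 * i) - 1 dvd Q" if "1 \<le> i" "i \<le> m" for i
    unfolding Q_def using that by (intro dvd_prodI) auto
  have r1d: "int r - 1 dvd Q" using fac[of 1] m sq_fac[of "int r" 1] by (metis dvd_mult_left dvd_trans le_refl power_one_right)
  have key: "\<exists>a. nat X' dvd nat (int r ^ a * Q)" if
    "0 \<le> X" "0 \<le> g" "g dvd X" "X dvd int r ^ a * Q" "X' = X div g" for X g X' a
    using nat_div_dvd[of X g "nat (int r ^ a * Q)"] that Q0 by auto
  have nq: "int (nat (int r ^ a * Q)) = int r ^ a * Q" for a using Q0 by simp
  show ?thesis
  proof (cases F)
    case Lin
    have m2: "m \<ge> 2" using sp Lin by simp
    define X where "X = int r ^ (m * (m - 1) div 2) * (\<Prod>i\<in>{2..m}. (int r ^ i - 1))"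
    have X0: "0 \<le> X" unfolding X_def using ge1[OF r1] r1 by (intro mult_nonneg_nonneg prod_nonneg) auto
    have d1: "(\<Prod>i\<in>{2..m}. (int r ^ i - 1)) dvd Q"
    proof -
      have "(\<Prod>i\<in>{2..m}. (int r ^ i - 1)) dvd (\<Prod>i\<in>{2..m}. (int r ^ (2 * i) - 1))"
        by (intro prod_dvd_prod) (simp add: sq_fac)
      also have "\<dots> dvd Q" unfolding Q_def by (intro prod_dvd_prod_subset) auto
      finally show ?thesis .
    qed
    have XQ: "X dvd int r ^ (m * (m - 1) div 2) * Q" unfolding X_def using d1 by (simp add: mult_dvd_mono)
    have g: "int (gcd m (r - 1)) dvd X"
    proof -
      have "int (gcd m (r - 1)) dvd int r - 1" using r1 by (metis gcd_dvd2 of_nat_dvd_iff of_nat_1 of_nat_diff)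
      also have "int r - 1 dvd int r ^ 2 - 1" using sq_fac[of "int r" 1] by simp
      also have "\<dots> dvd (\<Prod>i\<in>{2..m}. (int r ^ i - 1))" using m2 by (intro dvd_prodI) auto
      also have "\<dots> dvd X" unfolding X_def by simp
      finally show ?thesis .
    qed
    have "classical_order F m r = nat (X div int (gcd m (r - 1)))" using Lin X_def by simp
    hence "classical_order F m r dvd nat (int r ^ (m * (m - 1) div 2) * Q)"
      using nat_div_dvd[OF X0 _ g] XQ Q0 by simp
    thus ?thesis using Q0 nq by (metis of_nat_dvd_iff)
  next
    case Unit
    have m3: "m \<ge> 3" using sp Unit by simp
    define X where "X = int r ^ (m * (m - 1) div 2) * (\<Prod>i\<in>{2..m}. (int r ^ i - (-1) ^ i))"
    have X0: "0 \<le> X" unfolding X_def using ge1[OF r1] r1 neg1_le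
      by (intro mult_nonneg_nonneg prod_nonneg) (auto intro: order_trans[OF neg1_le ge1[OF r1]])
    have d1: "(\<Prod>i\<in>{2..m}. (int r ^ i - (-1) ^ i)) dvd Q"
    proof -
      have "(\<Prod>i\<in>{2..m}. (int r ^ i - (-1) ^ i)) dvd (\<Prod>i\<in>{2..m}. (int r ^ (2 * i) - 1))"
        by (intro prod_dvd_prod) (simp add: sq_fac2)
      also have "\<dots> dvd Q" unfolding Q_def by (intro prod_dvd_prod_subset) auto
      finally show ?thesis .
    qed
    have XQ: "X dvd int r ^ (m * (m - 1) div 2) * Q" unfolding X_def using d1 by (simp add: mult_dvd_mono)
    have g: "int (gcd m (r + 1)) dvd X"
    proof -
      have "int (gcd m (r + 1)) dvd int r + 1" by (metis gcd_dvd2 of_nat_Suc of_nat_dvd_iff add.commute Suc_eq_plus1)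
      also have "int r + 1 dvd int r ^ 2 - (-1) ^ 2" using sq_fac[of "int r" 1] by simp
      also have "\<dots> dvd (\<Prod>i\<in>{2..m}. (int r ^ i - (-1) ^ i))" using m3 by (intro dvd_prodI) auto
      also have "\<dots> dvd X" unfolding X_def by simp
      finally show ?thesis .
    qed
    have "classical_order F m r = nat (X div int (gcd m (r + 1)))" using Unit X_def by simp
    hence "classical_order F m r dvd nat (int r ^ (m * (m - 1) div 2) * Q)"
      using nat_div_dvd[OF X0 _ g] XQ Q0 by simp
    thus ?thesis using Q0 nq by (metis of_nat_dvd_iff)
  next
    case Symp
    define X where "X = int r ^ (m * m) * Q"
    have X0: "0 \<le> X" unfolding X_def using Q0 by simp
    have g: "int (gcd 2 (r - 1)) dvd X"
    proof -
      have "int (gcd 2 (r - 1)) dvd int r - 1" using r1 by (metis gcd_dvd2 of_nat_dvd_iff of_nat_1 of_nat_diff)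
      also have "\<dots> dvd X" unfolding X_def using r1d by simp
      finally show ?thesis .
    qed
    have "classical_order F m r = nat (X div int (gcd 2 (r - 1)))" using Symp X_def Q_def by simp
    hence "classical_order F m r dvd nat (int r ^ (m * m) * Q)"
      using nat_div_dvd[OF X0 _ g] Q0 X_def by simp
    thus ?thesis using Q0 nq by (metis of_nat_dvd_iff)
  next
    case OrthOdd
    have odd: "odd r" using sp OrthOdd by simp
    define X where "X = int r ^ (m * m) * Q"
    have X0: "0 \<le> X" unfolding X_def using Q0 by simp
    have g: "2 dvd X"
    proof -
      have "(2::int) dvd int r - 1" using odd by simp
      also have "\<dots> dvd X" unfolding X_def using r1d by simp
      finally show ?thesis .
    qed
    have "classical_order F m r = nat (X div 2)" using OrthOdd X_def Q_def by simp
    hence "classical_order F m r dvd nat (int r ^ (m * m) * Q)"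
      using nat_div_dvd[OF X0 _ g] Q0 X_def by simp
    thus ?thesis using Q0 nq by (metis of_nat_dvd_iff)
  next
    case OrthPlus
    define R where "R = (\<Prod>i\<in>{1..m-1}. int r ^ (2 * i) - 1)"
    have QR: "Q = R * (int r ^ (2 * m) - 1)"
    proof -
      have e: "{1..m} = insert m {1..m-1}" using m by auto
      have "Q = (int r ^ (2 * m) - 1) * R" unfolding Q_def R_def e by (subst prod.insert) auto
      thus ?thesis by (simp only: mult.commute)
    qed
    define X where "X = int r ^ (m * (m - 1)) * (int r ^ m - 1) * R"
    have R0: "0 \<le> R" unfolding R_def using ge1[OF r1] r1 by (intro prod_nonneg) auto
    have X0: "0 \<le> X" unfolding X_def using ge1[OF r1] r1 R0 by (intro mult_nonneg_nonneg) auto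
    have XQ: "X dvd int r ^ (m * (m - 1)) * Q"
    proof -
      have "int r ^ (m * (m - 1)) * Q = X * (int r ^ m + 1)"
        unfolding X_def QR sq_fac[of "int r" m] by (simp only: mult_ac)
      thus ?thesis by (metis dvd_triv_left)
    qed
    have g: "gcd 4 (int r ^ m - 1) dvd X"
    proof -
      have "int r ^ m - 1 dvd X" unfolding X_def by simp
      thus ?thesis by (rule dvd_trans[OF gcd_dvd2])
    qed
    have "classical_order F m r = nat (X div gcd 4 (int r ^ m - 1))" using OrthPlus X_def R_def by simp
    hence "classical_order F m r dvd nat (int r ^ (m * (m - 1)) * Q)"
      using nat_div_dvd[OF X0 _ g] XQ Q0 by simp
    thus ?thesis using Q0 nq by (metis of_nat_dvd_iff)
  next
    case OrthMinus
    define R where "R = (\<Prod>i\<in>{1..m-1}. int r ^ (2 * i) - 1)"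
    have QR: "Q = R * (int r ^ (2 * m) - 1)"
    proof -
      have e: "{1..m} = insert m {1..m-1}" using m by auto
      have "Q = (int r ^ (2 * m) - 1) * R" unfolding Q_def R_def e by (subst prod.insert) auto
      thus ?thesis by (simp only: mult.commute)
    qed
    define X where "X = int r ^ (m * (m - 1)) * (int r ^ m + 1) * R"
    have R0: "0 \<le> R" unfolding R_def using ge1[OF r1] r1 by (intro prod_nonneg) auto
    have X0: "0 \<le> X" unfolding X_def using R0 by (intro mult_nonneg_nonneg) auto
    have XQ: "X dvd int r ^ (m * (m - 1)) * Q"
    proof -
      have "int r ^ (m * (m - 1)) * Q = X * (int r ^ m - 1)"
        unfolding X_def QR sq_fac[of "int r" m] by (simp only: mult_ac)
      thus ?thesis by (metis dvd_triv_left)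
    qed
    have g: "gcd 4 (int r ^ m + 1) dvd X"
    proof -
      have "int r ^ m + 1 dvd X" unfolding X_def by simp
      thus ?thesis by (rule dvd_trans[OF gcd_dvd2])
    qed
    have "classical_order F m r = nat (X div gcd 4 (int r ^ m + 1))" using OrthMinus X_def R_def by simp
    hence "classical_order F m r dvd nat (int r ^ (m * (m - 1)) * Q)"
      using nat_div_dvd[OF X0 _ g] XQ Q0 by simp
    thus ?thesis using Q0 nq by (metis of_nat_dvd_iff)
  qed
qed


theorem lemma2p2:
  fixes F :: classical_family and m r p :: nat
  assumes "prime_power r" and "m \<ge> 1" and "simple_params F m r"
    and "prime p" and "\<not> p dvd r"
  shows "real (multiplicity p (classical_order F m r)) \<le> 3 * (ln (real ((r + 1) ^ m)) / ln (real p))"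
proof -
  note p = assms(4)
  obtain q k where qk: "prime q" "k \<ge> 1" "r = q ^ k" using assms(1) unfolding prime_power_def by blast
  have q2: "q \<ge> 2" using qk(1) prime_ge_2_nat by blast
  have "q ^ 1 \<le> q ^ k" using qk q2 by (intro power_increasing) auto
  hence r: "r \<ge> 2" using q2 qk by simp
  define Pn where "Pn = (\<Prod>i\<in>{1..m}. r ^ (2 * i) - 1)"
  have fpos: "r ^ (2 * i) - 1 > 0" if "i \<in> {1..m}" for i
  proof -
    have "r ^ 1 \<le> r ^ (2 * i)" using that r by (intro power_increasing) auto
    thus ?thesis using r by simp
  qed
  have IP: "int Pn = (\<Prod>i\<in>{1..m}. int r ^ (2 * i) - 1)" unfolding Pn_def of_nat_prod
  proof (intro prod.cong refl)
    fix i assume "i \<in> {1..m}"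
    hence "r ^ (2 * i) \<ge> 1" using fpos by fastforce
    thus "int (r ^ (2 * i) - 1) = int r ^ (2 * i) - 1" by (simp add: of_nat_diff)
  qed
  obtain a where a: "int (classical_order F m r) dvd int r ^ a * (\<Prod>i\<in>{1..m}. int r ^ (2 * i) - 1)"
    using exists_dvd[OF r assms(2,3)] by blast
  hence dv: "classical_order F m r dvd r ^ a * Pn"
    unfolding IP[symmetric] by (metis of_nat_dvd_iff of_nat_mult of_nat_power)
  have Pn0: "Pn > 0" unfolding Pn_def using fpos by (intro prod_pos) auto
  have r0: "r > 0" using r by simp
  have ra: "multiplicity p (r ^ a) = 0"
    by (rule not_dvd_imp_multiplicity_0) (use assms(5) p prime_dvd_power in blast)
  have "multiplicity p (classical_order F m r) \<le> multiplicity p (r ^ a * Pn)"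
    using dv Pn0 r0 by (intro dvd_imp_multiplicity_le) auto
  also have "\<dots> = multiplicity p (r ^ a) + multiplicity p Pn"
    by (rule prime_elem_multiplicity_mult_distrib) (use p Pn0 r0 in \<open>auto simp: prime_imp_prime_elem\<close>)
  also have "\<dots> = multiplicity p Pn" using ra by simp
  also have "\<dots> = (\<Sum>i\<in>{1..m}. multiplicity p (r ^ (2 * i) - 1))"
  proof -
    have pe: "prime_elem p" using p by (simp add: prime_imp_prime_elem)
    have z: "0 \<notin> (\<lambda>i. r ^ (2 * i) - 1) ` {1..m}"
    proof
      assume "0 \<in> (\<lambda>i. r ^ (2 * i) - 1) ` {1..m}"
      then obtain i where "i \<in> {1..m}" "r ^ (2 * i) - 1 = 0" by auto
      with fpos show False by fastforce
    qed
    show ?thesis unfolding Pn_def by (rule prime_elem_multiplicity_prod_distrib[OF pe z]) simp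
  qed
  finally have vle: "multiplicity p (classical_order F m r) \<le> (\<Sum>i\<in>{1..m}. multiplicity p (r ^ (2 * i) - 1))" .
  define v where "v = multiplicity p (classical_order F m r)"
  have p1: "p > 1" using p prime_gt_1_nat by blast
  have "p ^ v \<le> p ^ (\<Sum>i\<in>{1..m}. multiplicity p (r ^ (2 * i) - 1))"
    unfolding v_def using vle p1 by (intro power_increasing) auto
  also have "\<dots> \<le> (3 * r ^ 2) ^ m" by (rule main_bound[OF p r assms(5)])
  also have "\<dots> \<le> ((r + 1) ^ 3) ^ m"
  proof (rule power_mono)
    show "3 * r ^ 2 \<le> (r + 1) ^ 3" by (simp add: power2_eq_square power3_eq_cube algebra_simps)
  qed simp
  also have "\<dots> = ((r + 1) ^ m) ^ 3" by (simp add: power_mult[symmetric] mult.commute)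
  finally have nb: "p ^ v \<le> ((r + 1) ^ m) ^ 3" .
  hence "real p ^ v \<le> real ((r + 1) ^ m) ^ 3" by (metis of_nat_le_iff of_nat_power)
  hence "ln (real p ^ v) \<le> ln (real ((r + 1) ^ m) ^ 3)" using p1 by (subst ln_le_cancel_iff) auto
  hence "real v * ln (real p) \<le> 3 * ln (real ((r + 1) ^ m))" using p1 by (simp add: ln_realpow)
  moreover have "ln (real p) > 0" using p1 by simp
  ultimately show ?thesis unfolding v_def by (simp add: pos_le_divide_eq mult.commute)
qed

end
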